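(* For all integers $n\ge0$, $p\ge1$ and every real $x$, $$\mathcal{B}_{n,p}(x)=p\int_0^1(1-t)^{p-1}G_{n,x}(t)\,dt,\qquad\text{where } G_{n,x}(t)=\sum_{k=0}^{n}\binom{n}{k}\phi_k(t)\,x^{n-k}.$$
   Context: $S(n,k)$ denotes the Stirling numbers of the second kind and $\phi_n(t)=\sum_{k=0}^nS(n,k)t^k$ the Bell (exponential) polynomials; thus $\sum_{n\ge0}G_{n,x}(t)\frac{z^n}{n!}=\exp(xz+t(e^z-1))$. For an integer $p\ge0$, the $p$-Bell numbers $\mathcal{B}_{n,p}$ are defined by $\sum_{n\ge0}\mathcal{B}_{n,p}\frac{z^n}{n!}=\sum_{n\ge0}\binom{n+p}{p}^{-1}\frac{(e^z-1)^n}{n!}$, and the $p$-Bell polynomials by $\mathcal{B}_{n,p}(x)=\sum_{k=0}^n\binom nk\mathcal{B}_{k,p}x^{n-k}$ (equivalently $\sum_n\mathcal{B}_{n,p}(x)\frac{z^n}{n!}=e^{xz}\sum_{n}\mathcal{B}_{n,p}\frac{z^n}{n!}$). *)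

theory Defs
  imports "HOL-Analysis.Analysis" "HOL-Combinatorics.Stirling"
    "HOL-Computational_Algebra.Formal_Power_Series"
begin

definition bell_poly :: "nat \<Rightarrow> real \<Rightarrow> real" where
  "bell_poly n t = (\<Sum>k = 0..n. real (Stirling n k) * t ^ k)"

definition G_poly :: "nat \<Rightarrow> real \<Rightarrow> real \<Rightarrow> real" where
  "G_poly n x t = (\<Sum>k = 0..n. real (n choose k) * bell_poly k t * x ^ (n - k))"

text \<open>p-Bell numbers via their exponential generating function
  sum_k binom(k+p,p)^(-1) (e^z-1)^k/k!.  Since (e^z - 1)^k has order k,
  the n-th coefficient only receives contributions from k \<le> n, so the
  coefficient extraction of the infinite sum is the finite sum below.\<close>
definition p_bell :: "nat \<Rightarrow> nat \<Rightarrow> real" where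
  "p_bell n p = fact n * (\<Sum>k = 0..n.
      fps_nth ((fps_exp (1::real) - 1) ^ k) n / (fact k * real ((k + p) choose p)))"

definition p_bell_poly :: "nat \<Rightarrow> nat \<Rightarrow> real \<Rightarrow> real" where
  "p_bell_poly n p x = (\<Sum>k = 0..n. real (n choose k) * p_bell k p * x ^ (n - k))"

end

theory Submission
  imports Defs
begin

lemma stirling_fps:
  "fps_nth ((fps_exp (1::real) - 1) ^ k) n = fact k * real (Stirling n k) / fact n"
proof (induction n arbitrary: k)
  case 0
  then show ?case by (cases k) (auto simp: fps_nth_power_0)
next
  case (Suc n)
  show ?case
  proof (cases k)
    case 0
    then show ?thesis by simp
  next
    case (Suc j)
    define E where "E = fps_exp (1::real) - 1"
    have d: "fps_deriv (E ^ Suc j) = of_nat (Suc j) * E ^ Suc j + of_nat (Suc j) * E ^ j"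
      unfolding E_def fps_deriv_power' by (simp add: algebra_simps)
    have "of_nat (Suc n) * fps_nth (E ^ Suc j) (Suc n) = fps_nth (fps_deriv (E ^ Suc j)) n"
      using fps_deriv_nth[of "E ^ Suc j" n, symmetric] by simp
    also have "\<dots> = of_nat (Suc j) * fps_nth (E ^ Suc j) n + of_nat (Suc j) * fps_nth (E ^ j) n"
      unfolding d by (simp add: fps_of_nat[symmetric])
    finally have "fps_nth (E ^ Suc j) (Suc n) = (of_nat (Suc j) * fps_nth (E ^ Suc j) n + of_nat (Suc j) * fps_nth (E ^ j) n) / of_nat (Suc n)"
      by (simp add: field_simps del: of_nat_Suc)
    also have "\<dots> = fact (Suc j) * real (Stirling (Suc n) (Suc j)) / fact (Suc n)"
      using Suc.IH[of "Suc j"] Suc.IH[of j] unfolding E_def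
      apply (simp add: field_simps del: of_nat_Suc)
      apply (drule arg_cong[where f="\<lambda>z. real (Suc j) * z"])
      apply (simp add: algebra_simps del: of_nat_Suc)
      apply (simp add: algebra_simps)
      done
    finally show ?thesis using Suc unfolding E_def by simp
  qed
qed

lemma beta_int:
  assumes "p \<ge> 1"
  shows "((\<lambda>t. (1 - t) ^ (p - 1) * t ^ k) has_integral
            fact k * fact (p - 1) / fact (k + p)) {0..(1::real)}"
proof -
  have h: "((\<lambda>t. t powr (real k + 1 - 1) * (1 - t) powr (real p - 1)) has_integral
            Beta (real k + 1) (real p)) {0..1}"
    using assms by (intro has_integral_Beta_real) auto
  have pp: "real p - 1 = real (p - 1)" using assms by simp
  have "Beta (real k + 1) (real p) = fact k * fact (p - 1) / fact (k + p)"
  proof -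
    have g1: "Gamma (real k + 1) = fact k" using Gamma_fact[of k] by (simp add: add.commute)
    have g2: "Gamma (real p) = fact (p - 1)" using Gamma_fact[of "p - 1"] assms
      by (simp add: of_nat_diff)
    have g3: "Gamma (real k + 1 + real p) = fact (k + p)" using Gamma_fact[of "k + p"]
      by (simp add: add_ac)
    show ?thesis unfolding Beta_def g1 g2 g3 ..
  qed
  with h have h2: "((\<lambda>t. t powr (real k + 1 - 1) * (1 - t) powr (real p - 1)) has_integral
            fact k * fact (p - 1) / fact (k + p)) {0<..<1}"
    by (simp add: has_integral_Icc_iff_Ioo)
  have "((\<lambda>t. (1 - t) ^ (p - 1) * t ^ k) has_integral
            fact k * fact (p - 1) / fact (k + p)) {0<..<(1::real)}"
    using h2 by (subst has_integral_cong[where g="\<lambda>t. t powr (real k + 1 - 1) * (1 - t) powr (real p - 1)"])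
       (auto simp: pp powr_realpow)
  then show ?thesis by (simp add: has_integral_Icc_iff_Ioo)
qed

lemma beta_nat:
  assumes "p \<ge> 1"
  shows "real p * integral {0..1} (\<lambda>t. (1 - t) ^ (p - 1) * t ^ k) = 1 / real ((k + p) choose p)"
proof -
  have "real p * integral {0..1} (\<lambda>t. (1 - t) ^ (p - 1) * t ^ k)
      = real p * (fact k * fact (p - 1) / fact (k + p))"
    using beta_int[OF assms, of k] by (simp add: integral_unique)
  also have "\<dots> = fact k * fact p / fact (k + p)"
    using assms fact_reduce[of p, where 'a=real] by simp
  also have "\<dots> = 1 / real ((k + p) choose p)"
    by (simp add: binomial_fact)
  finally show ?thesis .
qed

lemma p_bell_alt: "p_bell n p = (\<Sum>k = 0..n. real (Stirling n k) / real ((k + p) choose p))"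
  unfolding p_bell_def stirling_fps sum_distrib_left
  by (intro sum.cong) auto

theorem mainTheorem15:
  fixes n p :: nat and x :: real
  assumes "p \<ge> 1"
  shows "p_bell_poly n p x =
    real p * integral {0..1} (\<lambda>t. (1 - t) ^ (p - 1) * G_poly n x t)"
proof -
  define c where "c k j = real (n choose k) * real (Stirling k j) * x ^ (n - k)" for k j
  define I where "I j = integral {0..1} (\<lambda>t. (1 - t) ^ (p - 1) * (t::real) ^ j)" for j
  have int: "(\<lambda>t. (1 - t) ^ (p - 1) * (t::real) ^ j) integrable_on {0..1}" for j
    using beta_int[OF assms, of j] by blast
  have eq: "(1 - t) ^ (p - 1) * G_poly n x t =
      (\<Sum>k = 0..n. \<Sum>j = 0..k. c k j * ((1 - t) ^ (p - 1) * t ^ j))" for t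
    unfolding G_poly_def bell_poly_def c_def sum_distrib_left sum_distrib_right
    by (intro sum.cong refl) (simp add: algebra_simps)
  have "integral {0..1} (\<lambda>t. (1 - t) ^ (p - 1) * G_poly n x t)
      = (\<Sum>k = 0..n. \<Sum>j = 0..k. c k j * I j)"
    unfolding eq I_def
    by (intro integral_unique has_integral_sum finite_atLeastAtMost has_integral_mult_right
          integrable_integral int)
  then have "real p * integral {0..1} (\<lambda>t. (1 - t) ^ (p - 1) * G_poly n x t)
      = (\<Sum>k = 0..n. \<Sum>j = 0..k. c k j * (real p * I j))"
    by (simp add: sum_distrib_left algebra_simps)
  also have "\<dots> = (\<Sum>k = 0..n. \<Sum>j = 0..k. c k j / real ((j + p) choose p))"
    unfolding I_def beta_nat[OF assms] by simp
  also have "\<dots> = p_bell_poly n p x"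
    unfolding p_bell_poly_def p_bell_alt c_def sum_distrib_left sum_distrib_right
    by (intro sum.cong refl) (simp add: algebra_simps)
  finally show ?thesis ..
qed

end
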